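(* Let $x$ be a $\theta$-cyclic point such that $G_x$ has exactly $k$ critical cuts, and let $U$ be a critical cut of $G_x$. Then $G_x^U$ (with the point $x^U$) has at most $k-1$ critical cuts.
   Context: $\mathrm{SUBT}(K_n)=\{x\in[0,1]^{E_n}: x(\delta(\{i\}))=2\ \forall i,\ x(\delta(U))\ge2\ \forall\,\emptyset\ne U\subsetneq V_n\}$ where $K_n$ is the complete graph on $V_n=\{1,\ldots,n\}$ with edge set $E_n$ and $\delta(U)$ is the set of edges with exactly one endpoint in $U$. $G_x=(V_n,E_x)$, $E_x=\{e:x_e>0\}$. A $\theta$-cyclic point ($0<\theta\le\frac12$) is $x\in\mathrm{SUBT}(K_n)\cap\{0,\theta,1-\theta,1\}^{E_n}$ with $G_x$ of maximum degree at most 3 and every vertex incident to an edge of $x$-value 1. A cut $U$ of a graph with vertex set $V$ is proper if $|U|\ge2$ and $|V\setminus U|\ge2$. A critical cut is a proper cut $U$ with $|\delta(U)|=3$, exactly one edge of $\delta(U)$ of $x$-value 1, and the edges of $\delta(U)$ having pairwise distinct endpoints in $U$ and pairwise distinct endpoints outside $U$; a cut and its complement are regarded as the same cut. $G_x^U$ is obtained from $G_x$ by identifying all vertices of $V_n\setminus U$ into a single vertex and deleting loops; $x^U$ assigns each edge of $G_x^U$ its $x$-value. *)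

theory Defs
  imports Complex_Main
begin

definition Vn :: "nat \<Rightarrow> nat set" where
  "Vn n = {1..n}"

definition En :: "nat \<Rightarrow> nat set set" where
  "En n = {e. e \<subseteq> Vn n \<and> card e = 2}"

definition delta :: "'a set set \<Rightarrow> 'a set \<Rightarrow> 'a set set" where
  "delta E U = {e \<in> E. card (e \<inter> U) = 1}"

definition SUBT :: "nat \<Rightarrow> (nat set \<Rightarrow> real) set" where
  "SUBT n = {x. (\<forall>e\<in>En n. 0 \<le> x e \<and> x e \<le> 1)
              \<and> (\<forall>i\<in>Vn n. (\<Sum>e\<in>delta (En n) {i}. x e) = 2)
              \<and> (\<forall>U. U \<noteq> {} \<and> U \<subset> Vn n \<longrightarrow> (\<Sum>e\<in>delta (En n) U. x e) \<ge> 2)}"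

definition Ex :: "nat \<Rightarrow> (nat set \<Rightarrow> real) \<Rightarrow> nat set set" where
  "Ex n x = {e \<in> En n. x e > 0}"

definition theta_cyclic :: "nat \<Rightarrow> real \<Rightarrow> (nat set \<Rightarrow> real) \<Rightarrow> bool" where
  "theta_cyclic n \<theta> x \<longleftrightarrow>
     0 < \<theta> \<and> \<theta> \<le> 1/2 \<and> x \<in> SUBT n
     \<and> (\<forall>e\<in>En n. x e \<in> {0, \<theta>, 1 - \<theta>, 1})
     \<and> (\<forall>i\<in>Vn n. card {e \<in> Ex n x. i \<in> e} \<le> 3)
     \<and> (\<forall>i\<in>Vn n. \<exists>e\<in>En n. i \<in> e \<and> x e = 1)"

definition critical_cut :: "'a set \<Rightarrow> 'a set set \<Rightarrow> ('a set \<Rightarrow> real) \<Rightarrow> 'a set \<Rightarrow> bool" where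
  "critical_cut V E x U \<longleftrightarrow>
     U \<subseteq> V \<and> card U \<ge> 2 \<and> card (V - U) \<ge> 2
     \<and> card (delta E U) = 3
     \<and> card {e \<in> delta E U. x e = 1} = 1
     \<and> inj_on (\<lambda>e. the_elem (e \<inter> U)) (delta E U)
     \<and> inj_on (\<lambda>e. the_elem (e - U)) (delta E U)"

definition critical_cuts :: "'a set \<Rightarrow> 'a set set \<Rightarrow> ('a set \<Rightarrow> real) \<Rightarrow> 'a set set set" where
  "critical_cuts V E x = {{U, V - U} | U. critical_cut V E x U}"

text \<open>Contraction of V - U into the single (new) vertex w; loops are deleted.\<close>
definition cmap :: "'a set \<Rightarrow> 'a \<Rightarrow> 'a \<Rightarrow> 'a" where
  "cmap U w v = (if v \<in> U then v else w)"

definition contr_V :: "'a set \<Rightarrow> 'a \<Rightarrow> 'a set" where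
  "contr_V U w = insert w U"

definition contr_E :: "'a set set \<Rightarrow> 'a set \<Rightarrow> 'a \<Rightarrow> 'a set set" where
  "contr_E E U w = {cmap U w ` e | e. e \<in> E \<and> card (cmap U w ` e) = 2}"

text \<open>x^U gives each edge of the contracted graph the x-value of an edge it comes from
  (unique when U is a critical cut, since then no parallel edges arise).\<close>
definition contr_x :: "'a set set \<Rightarrow> ('a set \<Rightarrow> real) \<Rightarrow> 'a set \<Rightarrow> 'a \<Rightarrow> 'a set \<Rightarrow> real" where
  "contr_x E x U w e' = x (SOME e. e \<in> E \<and> cmap U w ` e = e')"

end

theory Submission imports Defs begin

lemma card_inter_pair:
  assumes "a \<noteq> b"
  shows "card ({a,b} \<inter> W) = 1 \<longleftrightarrow> (a \<in> W) \<noteq> (b \<in> W)"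
  using assms by (cases "a \<in> W"; cases "b \<in> W") (auto simp: Int_insert_left)

lemma crit_compl:
  assumes E: "\<forall>e\<in>E. e \<subseteq> V \<and> card e = 2" and fin: "finite V"
    and c: "critical_cut V E x U"
  shows "critical_cut V E x (V - U)"
proof -
  have d: "delta E (V - U) = delta E U"
    unfolding delta_def
  proof (intro Collect_cong conj_cong refl)
    fix e assume "e \<in> E"
    then obtain a b where "e = {a,b}" "a \<noteq> b" "a \<in> V" "b \<in> V" using E card_2_iff
      by (metis insert_subset)
    then show "(card (e \<inter> (V - U)) = 1) = (card (e \<inter> U) = 1)"
      using card_inter_pair[of a b] by auto
  qed
  have i1: "\<And>e. e \<in> delta E U \<Longrightarrow> e \<inter> (V - U) = e - U"
    using E unfolding delta_def by auto
  have i2: "\<And>e. e \<in> delta E U \<Longrightarrow> e - (V - U) = e \<inter> U"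
    using E unfolding delta_def by auto
  have "V - (V - U) = U" using c unfolding critical_cut_def by auto
  moreover have "inj_on (\<lambda>e. the_elem (e \<inter> (V - U))) (delta E (V - U))"
    unfolding d using c i1 unfolding critical_cut_def
    by (metis (no_types, lifting) inj_on_cong)
  moreover have "inj_on (\<lambda>e. the_elem (e - (V - U))) (delta E (V - U))"
    unfolding d using c i2 unfolding critical_cut_def
    by (metis (no_types, lifting) inj_on_cong)
  ultimately show ?thesis using c d unfolding critical_cut_def
    by auto
qed

lemma key:
  assumes E: "\<forall>e\<in>E. e \<subseteq> V \<and> card e = 2" and w: "w \<notin> V" and UV: "U \<subseteq> V"
    and fin: "finite V"
    and injU: "inj_on (\<lambda>e. the_elem (e \<inter> U)) (delta E U)"
    and WU: "W \<subseteq> U" and VU: "card (V - U) \<ge> 2"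
    and cc: "critical_cut (insert w U) (contr_E E U w) (contr_x E x U w) W"
  shows "critical_cut V E x W"
proof -
  define f where "f = (\<lambda>e. cmap U w ` e)"
  have wW: "w \<notin> W" using w UV WU by auto
  have fW: "f e \<inter> W = e \<inter> W" for e
    using WU wW unfolding f_def cmap_def by auto
  have fmW: "f e - W = f (e - W)" for e
    using WU wW unfolding f_def cmap_def by auto
  have finE: "finite E" using E fin
    by (meson Pow_iff finite_Pow_iff finite_subset subsetI)
  have pair: "\<exists>a b. e = {a,b} \<and> a \<noteq> b \<and> a \<in> W \<and> b \<notin> W" if "e \<in> delta E W" for e
  proof -
    from that have "e \<in> E" "card (e \<inter> W) = 1" unfolding delta_def by auto
    then obtain a b where ab: "e = {a,b}" "a \<noteq> b" using E card_2_iff by metis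
    then show ?thesis using card_inter_pair[of a b W] \<open>card (e \<inter> W) = 1\<close>
      by (metis insert_commute)
  qed
  have injf: "inj_on f (delta E W)"
  proof
    fix e1 e2 assume e1: "e1 \<in> delta E W" and e2: "e2 \<in> delta E W" and eq: "f e1 = f e2"
    obtain a1 b1 where p1: "e1 = {a1,b1}" "a1 \<noteq> b1" "a1 \<in> W" "b1 \<notin> W" using pair[OF e1] by blast
    obtain a2 b2 where p2: "e2 = {a2,b2}" "a2 \<noteq> b2" "a2 \<in> W" "b2 \<notin> W" using pair[OF e2] by blast
    have "f e1 \<inter> W = f e2 \<inter> W" using eq by simp
    hence "{a1} = {a2}" using p1 p2 fW by (metis Int_insert_left_if1 Int_insert_left_if0 inf_bot_left)
    hence a: "a1 = a2" by simp
    have aU: "a1 \<in> U" using p1 WU by auto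
    show "e1 = e2"
    proof (cases "b1 \<in> U")
      case True
      hence fe1: "f e1 = e1" using p1 aU unfolding f_def cmap_def by auto
      hence "w \<notin> f e2" using eq p1 True aU w UV by auto
      hence "b2 \<in> U" using p2 unfolding f_def cmap_def by (auto split: if_splits)
      hence "f e2 = e2" using p2 WU unfolding f_def cmap_def by auto
      then show ?thesis using fe1 eq by simp
    next
      case False
      hence "w \<in> f e1" using p1 unfolding f_def cmap_def by auto
      hence "w \<in> f e2" using eq by simp
      hence b2: "b2 \<notin> U" using p2 WU w UV unfolding f_def cmap_def by (auto split: if_splits)
      have "e1 \<in> delta E U" "e2 \<in> delta E U" using e1 e2 p1 p2 False b2 aU a card_inter_pair
        unfolding delta_def by auto
      moreover have "the_elem (e1 \<inter> U) = a1" "the_elem (e2 \<inter> U) = a1"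
        using p1 p2 False b2 aU a by auto
      ultimately show ?thesis using injU by (metis inj_onD)
    qed
  qed
  have dE: "delta (contr_E E U w) W = f ` delta E W"
  proof
    show "delta (contr_E E U w) W \<subseteq> f ` delta E W"
    proof
      fix e' assume "e' \<in> delta (contr_E E U w) W"
      then obtain e where "e \<in> E" "e' = f e" "card (e' \<inter> W) = 1"
        unfolding delta_def contr_E_def f_def by auto
      then show "e' \<in> f ` delta E W" using fW unfolding delta_def by auto
    qed
    show "f ` delta E W \<subseteq> delta (contr_E E U w) W"
    proof
      fix e' assume "e' \<in> f ` delta E W"
      then obtain e where e: "e \<in> delta E W" "e' = f e" by auto
      obtain a b where p: "e = {a,b}" "a \<noteq> b" "a \<in> W" "b \<notin> W" using pair[OF e(1)] by blast
      have "a \<in> U" using p WU by auto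
      moreover have "cmap U w b \<noteq> a" using p \<open>a \<in> U\<close> w UV unfolding cmap_def by auto
      moreover have "f e = {cmap U w a, cmap U w b}" by (simp add: f_def p)
      moreover have "cmap U w a = a" using \<open>a \<in> U\<close> by (simp add: cmap_def)
      ultimately have "card (f e) = 2" by simp
      moreover have "e \<in> E" "card (e \<inter> W) = 1" using e unfolding delta_def by auto
      ultimately show "e' \<in> delta (contr_E E U w) W"
        using e fW unfolding delta_def contr_E_def f_def by auto
    qed
  qed
  have xval: "contr_x E x U w (f e) = x e" if e: "e \<in> delta E W" for e
  proof -
    have ex: "\<exists>e2. e2 \<in> E \<and> cmap U w ` e2 = f e" using e unfolding delta_def f_def by auto
    define e2 where "e2 = (SOME e2. e2 \<in> E \<and> cmap U w ` e2 = f e)"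
    have "e2 \<in> E \<and> f e2 = f e" using someI_ex[OF ex] unfolding e2_def f_def by simp
    moreover have "card (e \<inter> W) = 1" using e unfolding delta_def by auto
    moreover have "e2 \<inter> W = e \<inter> W" using fW[of e2] fW[of e] calculation(1) by simp
    ultimately have "e2 \<in> delta E W" "f e2 = f e" unfolding delta_def by auto
    hence "e2 = e" using injf e by (metis inj_onD)
    thus ?thesis unfolding contr_x_def e2_def f_def by simp
  qed
  from cc have c3: "card (delta (contr_E E U w) W) = 3"
    and c1: "card {e \<in> delta (contr_E E U w) W. contr_x E x U w e = 1} = 1"
    and ci1: "inj_on (\<lambda>e. the_elem (e \<inter> W)) (delta (contr_E E U w) W)"
    and ci2: "inj_on (\<lambda>e. the_elem (e - W)) (delta (contr_E E U w) W)"
    and cW: "card W \<ge> 2"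
    unfolding critical_cut_def by auto
  have "card (delta E W) = 3" using c3 dE card_image[OF injf] by simp
  moreover have "{e \<in> delta (contr_E E U w) W. contr_x E x U w e = 1} = f ` {e \<in> delta E W. x e = 1}"
    unfolding dE using xval by auto
  hence "card {e \<in> delta E W. x e = 1} = 1" using c1 card_image[OF inj_on_subset[OF injf]]
    by (metis (no_types, lifting) mem_Collect_eq subsetI)
  moreover have "inj_on (\<lambda>e. the_elem (e \<inter> W)) (delta E W)"
  proof
    fix e1 e2 assume "e1 \<in> delta E W" "e2 \<in> delta E W" "the_elem (e1 \<inter> W) = the_elem (e2 \<inter> W)"
    then have "f e1 = f e2" using ci1 dE fW by (metis image_eqI inj_onD)
    then show "e1 = e2" using injf \<open>e1 \<in> delta E W\<close> \<open>e2 \<in> delta E W\<close> by (metis inj_onD)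
  qed
  moreover have "inj_on (\<lambda>e. the_elem (e - W)) (delta E W)"
  proof
    fix e1 e2 assume e1: "e1 \<in> delta E W" and e2: "e2 \<in> delta E W"
      and eq: "the_elem (e1 - W) = the_elem (e2 - W)"
    obtain a1 b1 where p1: "e1 = {a1,b1}" "a1 \<noteq> b1" "a1 \<in> W" "b1 \<notin> W" using pair[OF e1] by blast
    obtain a2 b2 where p2: "e2 = {a2,b2}" "a2 \<noteq> b2" "a2 \<in> W" "b2 \<notin> W" using pair[OF e2] by blast
    have "e1 - W = {b1}" "e2 - W = {b2}" using p1 p2 by auto
    hence "b1 = b2" using eq by simp
    hence "the_elem (f e1 - W) = the_elem (f e2 - W)"
      using fmW \<open>e1 - W = {b1}\<close> \<open>e2 - W = {b2}\<close> unfolding f_def by simp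
    then have "f e1 = f e2" using ci2 dE e1 e2 by (metis image_eqI inj_onD)
    then show "e1 = e2" using injf e1 e2 by (metis inj_onD)
  qed
  moreover have "W \<subseteq> V" using WU UV by auto
  moreover have "card (V - W) \<ge> 2"
  proof -
    have "V - U \<subseteq> V - W" using WU by blast
    then show ?thesis using VU card_mono[of "V - W" "V - U"] fin by auto
  qed
  ultimately show ?thesis using cW unfolding critical_cut_def by auto
qed

theorem mainTheorem12:
  fixes n k :: nat and \<theta> :: real and x :: "nat set \<Rightarrow> real" and U :: "nat set"
  assumes "theta_cyclic n \<theta> x"
    and "card (critical_cuts (Vn n) (Ex n x) x) = k"
    and "critical_cut (Vn n) (Ex n x) x U"
  shows "card (critical_cuts (contr_V U 0) (contr_E (Ex n x) U 0) (contr_x (Ex n x) x U 0)) \<le> k - 1"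
proof -
  define V where "V = Vn n"
  define E where "E = Ex n x"
  define V' where "V' = insert (0::nat) U"
  define E' where "E' = contr_E E U 0"
  define x' where "x' = contr_x E x U 0"
  have Eok: "\<forall>e\<in>E. e \<subseteq> V \<and> card e = 2" unfolding E_def V_def Ex_def En_def by auto
  have w: "0 \<notin> V" unfolding V_def Vn_def by auto
  have finV: "finite V" unfolding V_def Vn_def by auto
  have cU: "critical_cut V E x U" using assms(3) unfolding V_def E_def .
  hence UV: "U \<subseteq> V" and VU: "card (V - U) \<ge> 2"
    and injU: "inj_on (\<lambda>e. the_elem (e \<inter> U)) (delta E U)"
    unfolding critical_cut_def by auto
  have finU: "finite U" using UV finV finite_subset by auto
  have finV': "finite V'" unfolding V'_def using finU by auto
  have E'ok: "\<forall>e\<in>E'. e \<subseteq> V' \<and> card e = 2"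
    unfolding E'_def contr_E_def V'_def cmap_def by auto
  define S where "S = {W. critical_cut V' E' x' W \<and> 0 \<notin> W}"
  have finS: "finite S"
    by (rule finite_subset[of _ "Pow V'"]) (auto simp: S_def critical_cut_def finV')
  have sub1: "critical_cuts V' E' x' \<subseteq> (\<lambda>W. {W, V' - W}) ` S"
  proof
    fix C assume "C \<in> critical_cuts V' E' x'"
    then obtain U' where C: "C = {U', V' - U'}" and cu: "critical_cut V' E' x' U'"
      unfolding critical_cuts_def by auto
    show "C \<in> (\<lambda>W. {W, V' - W}) ` S"
    proof (cases "0 \<in> U'")
      case False
      then show ?thesis using C cu unfolding S_def by auto
    next
      case True
      have "critical_cut V' E' x' (V' - U')" using crit_compl[OF E'ok finV' cu] .
      moreover have "V' - (V' - U') = U'" using cu unfolding critical_cut_def by auto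
      ultimately have "V' - U' \<in> S" "C = {V' - U', V' - (V' - U')}"
        using True C unfolding S_def by auto
      then show ?thesis by blast
    qed
  qed
  have c1: "card (critical_cuts V' E' x') \<le> card S"
    using card_mono[OF finite_imageI[OF finS] sub1] card_image_le[OF finS, of "\<lambda>W. {W, V' - W}"]
    by linarith
  have SU: "W \<subseteq> U" if "W \<in> S" for W
    using that unfolding S_def V'_def critical_cut_def by auto
  define h where "h W = {W, V - W}" for W
  have injh: "inj_on h S"
  proof
    fix W1 W2 assume a: "W1 \<in> S" "W2 \<in> S" "h W1 = h W2"
    show "W1 = W2"
    proof (rule ccontr)
      assume "W1 \<noteq> W2"
      hence "W1 = V - W2" using a(3) unfolding h_def by (auto simp: doubleton_eq_iff)
      hence "V - U = {}" using SU[OF a(1)] SU[OF a(2)] UV by auto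
      thus False using VU by (metis card.empty le_zero_eq zero_neq_numeral)
    qed
  qed
  have sub2: "h ` S \<subseteq> critical_cuts V E x - {{U, V - U}}"
  proof
    fix C assume "C \<in> h ` S"
    then obtain W where W: "W \<in> S" "C = h W" by auto
    have WU: "W \<subseteq> U" using SU[OF W(1)] .
    have ccW: "critical_cut V' E' x' W" using W(1) unfolding S_def by auto
    have "critical_cut V E x W"
      by (rule key[OF Eok w UV finV injU WU VU]) (use ccW in \<open>simp add: V'_def E'_def x'_def\<close>)
    hence "C \<in> critical_cuts V E x" using W unfolding h_def critical_cuts_def by auto
    moreover have "C \<noteq> {U, V - U}"
    proof
      assume "C = {U, V - U}"
      hence "W = U \<or> W = V - U" using W(2) unfolding h_def by (auto simp: doubleton_eq_iff)
      moreover have "W \<noteq> U"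
      proof
        assume "W = U"
        hence "V' - W = {0}" unfolding V'_def using UV w by auto
        thus False using ccW unfolding critical_cut_def by auto
      qed
      moreover have "W \<noteq> V - U"
      proof
        assume "W = V - U" hence "V - U = {}" using WU by auto
        thus False using VU by (metis card.empty le_zero_eq zero_neq_numeral)
      qed
      ultimately show False by blast
    qed
    ultimately show "C \<in> critical_cuts V E x - {{U, V - U}}" by simp
  qed
  have finC: "finite (critical_cuts V E x)"
    by (rule finite_subset[of _ "Pow (Pow V)"]) (auto simp: critical_cuts_def critical_cut_def finV)
  have UC: "{U, V - U} \<in> critical_cuts V E x" using cU unfolding critical_cuts_def by auto
  have "card S = card (h ` S)" using card_image[OF injh] by simp
  also have "\<dots> \<le> card (critical_cuts V E x - {{U, V - U}})"
    using card_mono[OF _ sub2] finC by simp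
  also have "\<dots> = k - 1" using card_Diff_singleton[OF UC] assms(2) unfolding V_def E_def by simp
  finally show ?thesis using c1 unfolding V'_def E'_def x'_def E_def contr_V_def by simp
qed

end
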